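(* Let $(X,\mu)$ be a measure space and $p>2$. For all non-zero functions $g,h\in L^p(X,\mu)$ (real or complex valued), $$\|g+h\|_p \leq \left( 1 - \frac{\|g\|_p\|h\|_p}{(\|g\|_p + \|h\|_p)^2} \left\Vert \frac{|g|^{p/2}}{\|g\|_p^{p/2}} - \frac{|h|^{p/2}}{\|h\|_p^{p/2}} \right\Vert_2^2 \right)^{1/p} (\|g\|_p + \|h\|_p).$$
   Context: $\|f\|_q := \left(\int |f|^q\,d\mu\right)^{1/q}$. *)

theory Defs
  imports "HOL-Analysis.Analysis"
begin

definition memLp :: "'a measure \<Rightarrow> real \<Rightarrow> ('a \<Rightarrow> 'b::{banach,second_countable_topology}) \<Rightarrow> bool" where
  "memLp M q f \<longleftrightarrow> f \<in> borel_measurable M \<and> integrable M (\<lambda>x. norm (f x) powr q)"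

definition Lp_norm :: "'a measure \<Rightarrow> real \<Rightarrow> ('a \<Rightarrow> 'b::real_normed_vector) \<Rightarrow> real" where
  "Lp_norm M q f = (\<integral>x. norm (f x) powr q \<partial>M) powr (1 / q)"

end

theory Submission
  imports Defs
begin


lemma one_zero: fixes s y q :: real assumes "0\<le>s" "s\<le>1" "0\<le>y" "q\<ge>1"
  shows "(s*y) powr q \<le> s * y powr q"
proof -
  have "(s*y) powr q = s powr q * y powr q" using assms by (simp add: powr_mult)
  also have "s powr q \<le> s powr 1"
    using assms by (cases "s = 0") (auto intro: powr_le_one_le)
  hence "s powr q * y powr q \<le> s * y powr q" using assms by (simp add: mult_right_mono)
  finally show ?thesis .
qed

lemma cvx: fixes t x y q :: real assumes "0\<le>t" "t\<le>1" "0\<le>x" "0\<le>y" "q\<ge>1"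
  shows "(t*x + (1-t)*y) powr q \<le> t * x powr q + (1-t) * y powr q"
proof (cases "x = 0 \<or> y = 0")
  case True
  then show ?thesis using one_zero[of t x q] one_zero[of "1-t" y q] assms by auto
next
  case False
  hence "x > 0" "y>0" using assms by auto
  from convex_onD[OF powr_convex[OF assms(5)], of t y x] this assms
  show ?thesis by (simp add: algebra_simps)
qed


lemma sq_powr: fixes z p :: real shows "(z powr (p/2))^2 = z powr p"
proof -
  have "(z powr (p/2))^2 = z powr (p/2) * z powr (p/2)" by (simp add: power2_eq_square)
  also have "\<dots> = z powr (p/2 + p/2)" by (simp add: powr_add[symmetric])
  finally show ?thesis by simp
qed

lemma pw:
  fixes n m N a b p :: real
  assumes "0\<le>n" "0\<le>m" "0 \<le> N" "N \<le> n+m" "a>0" "b>0" "p\<ge>2"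
  defines "t \<equiv> a/(a+b)"
  defines "X \<equiv> n powr (p/2) / a powr (p/2)" and "Y \<equiv> m powr (p/2) / b powr (p/2)"
  shows "N powr p \<le> (a+b) powr p * (t*X^2 + (1-t)*Y^2 - t*(1-t)*(X-Y)^2)"
proof -
  define u where "u = n/a"
  define w where "w = m/b"
  have t01: "0\<le>t" "t\<le>1" using assms(5,6) unfolding t_def by auto
  have uv: "u\<ge>0" "w\<ge>0" using assms unfolding u_def w_def by auto
  have Xu: "X = u powr (p/2)" unfolding X_def u_def using assms by (simp add: powr_divide)
  have Yv: "Y = w powr (p/2)" unfolding Y_def w_def using assms by (simp add: powr_divide)
  have nm: "n + m = (a+b) * (t*u + (1-t)*w)"
  proof -
    have e1: "(a+b)*t = a" "(a+b)*(1-t) = b" unfolding t_def using assms(5,6) by (simp_all add: field_simps)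
    have "(a+b) * (t*u + (1-t)*w) = ((a+b)*t)*u + ((a+b)*(1-t))*w" by (simp add: algebra_simps)
    also have "\<dots> = n + m" unfolding e1 u_def w_def using assms(5,6) by simp
    finally show ?thesis by simp
  qed
  have "N powr p \<le> (n+m) powr p" using assms by (intro powr_mono2) auto
  also have "\<dots> = (a+b) powr p * (t*u+(1-t)*w) powr p"
    unfolding nm using assms uv t01 by (subst powr_mult) auto
  also have "(t*u+(1-t)*w) powr p = ((t*u+(1-t)*w) powr (p/2))^2"
    by (simp add: sq_powr)
  also have "(t*u+(1-t)*w) powr (p/2) \<le> t*X+(1-t)*Y"
    unfolding Xu Yv using cvx[of t u w "p/2"] uv t01 assms by auto
  hence "((t*u+(1-t)*w) powr (p/2))^2 \<le> (t*X+(1-t)*Y)^2"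
    by (intro power_mono) auto
  also have "(t*X+(1-t)*Y)^2 = t*X^2 + (1-t)*Y^2 - t*(1-t)*(X-Y)^2"
    by (simp add: power2_eq_square algebra_simps)
  finally show ?thesis by (simp add: mult_left_mono)
qed


lemma norm_powr2: "norm (r::real) powr 2 = r^2"
  by (cases "r = 0") (auto simp: powr_numeral)

lemma pos_norm:
  fixes g :: "'a \<Rightarrow> 'b::{banach,second_countable_topology}"
  assumes "memLp M p g" "\<not> (AE x in M. g x = 0)"
  shows "(\<integral>x. norm (g x) powr p \<partial>M) > 0"
proof -
  have int: "integrable M (\<lambda>x. norm (g x) powr p)" using assms unfolding memLp_def by auto
  have ge: "(\<integral>x. norm (g x) powr p \<partial>M) \<ge> 0" by (intro integral_nonneg_AE) auto
  have "(\<integral>x. norm (g x) powr p \<partial>M) \<noteq> 0"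
  proof
    assume "(\<integral>x. norm (g x) powr p \<partial>M) = 0"
    hence "AE x in M. norm (g x) powr p = 0" using integral_nonneg_eq_0_iff_AE[OF int] by auto
    hence "AE x in M. g x = 0" by eventually_elim simp
    thus False using assms by simp
  qed
  thus ?thesis using ge by linarith
qed

lemma main:
  fixes g h :: "'a \<Rightarrow> 'b::{banach,second_countable_topology}"
  assumes p: "p > 2" and mg: "memLp M p g" and mh: "memLp M p h"
    and ng: "\<not> (AE x in M. g x = 0)" and nh: "\<not> (AE x in M. h x = 0)"
  shows "Lp_norm M p (\<lambda>x. g x + h x) \<le>
              (1 - (Lp_norm M p g * Lp_norm M p h) / (Lp_norm M p g + Lp_norm M p h)^2 *
                   (Lp_norm M 2 (\<lambda>x. norm (g x) powr (p/2) / Lp_norm M p g powr (p/2)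
                                    - norm (h x) powr (p/2) / Lp_norm M p h powr (p/2)))^2) powr (1/p)
              * (Lp_norm M p g + Lp_norm M p h)"
proof -
  define G where "G = (\<integral>x. norm (g x) powr p \<partial>M)"
  define H where "H = (\<integral>x. norm (h x) powr p \<partial>M)"
  have G: "G > 0" unfolding G_def by (rule pos_norm[OF mg ng])
  have H: "H > 0" unfolding H_def by (rule pos_norm[OF mh nh])
  define a where "a = Lp_norm M p g"
  define b where "b = Lp_norm M p h"
  have aG: "a = G powr (1/p)" unfolding a_def G_def Lp_norm_def ..
  have bH: "b = H powr (1/p)" unfolding b_def H_def Lp_norm_def ..
  have a: "a > 0" "a powr p = G" using G p unfolding aG by (auto simp: powr_powr)
  have b: "b > 0" "b powr p = H" using H p unfolding bH by (auto simp: powr_powr)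
  define t where "t = a/(a+b)"
  define X where "X = (\<lambda>x. norm (g x) powr (p/2) / a powr (p/2))"
  define Y where "Y = (\<lambda>x. norm (h x) powr (p/2) / b powr (p/2))"
  define D where "D = (\<integral>x. (X x - Y x)^2 \<partial>M)"
  have [measurable]: "g \<in> borel_measurable M" "h \<in> borel_measurable M"
    using mg mh unfolding memLp_def by auto
  have ig: "integrable M (\<lambda>x. norm (g x) powr p)" using mg unfolding memLp_def by auto
  have ih: "integrable M (\<lambda>x. norm (h x) powr p)" using mh unfolding memLp_def by auto
  have X2: "(X x)^2 = norm (g x) powr p / G" for x
    unfolding X_def a(2)[symmetric] by (simp add: power_divide sq_powr)
  have Y2: "(Y x)^2 = norm (h x) powr p / H" for x
    unfolding Y_def b(2)[symmetric] by (simp add: power_divide sq_powr)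
  have iX: "integrable M (\<lambda>x. (X x)^2)" unfolding X2 using ig by simp
  have iY: "integrable M (\<lambda>x. (Y x)^2)" unfolding Y2 using ih by simp
  have IX: "(\<integral>x. (X x)^2 \<partial>M) = 1" unfolding X2 using G by (simp add: G_def)
  have IY: "(\<integral>x. (Y x)^2 \<partial>M) = 1" unfolding Y2 using H by (simp add: H_def)
  have mX[measurable]: "X \<in> borel_measurable M" unfolding X_def by measurable
  have mY[measurable]: "Y \<in> borel_measurable M" unfolding Y_def by measurable
  have iD: "integrable M (\<lambda>x. (X x - Y x)^2)"
  proof (rule Bochner_Integration.integrable_bound[where f="\<lambda>x. 2*(X x)^2 + 2*(Y x)^2"])
    show "integrable M (\<lambda>x. 2*(X x)^2 + 2*(Y x)^2)" using iX iY by simp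
    show "AE x in M. norm ((X x - Y x)^2) \<le> norm (2*(X x)^2 + 2*(Y x)^2)"
    proof
      fix x
      have "(X x - Y x)^2 \<le> 2*(X x)^2 + 2*(Y x)^2"
      proof -
        have "2*(X x)^2 + 2*(Y x)^2 - (X x - Y x)^2 = (X x + Y x)^2"
          by (simp add: power2_eq_square algebra_simps)
        moreover have "(X x + Y x)^2 \<ge> 0" by simp
        ultimately show ?thesis by linarith
      qed
      thus "norm ((X x - Y x)^2) \<le> norm (2*(X x)^2 + 2*(Y x)^2)" by simp
    qed
  qed measurable
  define R where "R = (\<lambda>x. (a+b) powr p * (t*(X x)^2 + (1-t)*(Y x)^2 - t*(1-t)*(X x - Y x)^2))"
  have pwx: "norm (g x + h x) powr p \<le> R x" for x
    unfolding R_def t_def X_def Y_def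
    using p a b by (intro pw) (auto intro: norm_triangle_ineq)
  have iR: "integrable M R" unfolding R_def using iX iY iD by simp
  have iF: "integrable M (\<lambda>x. norm (g x + h x) powr p)"
  proof (rule Bochner_Integration.integrable_bound[OF iR])
    show "AE x in M. norm (norm (g x + h x) powr p) \<le> norm (R x)"
      using pwx by (auto intro: order_trans[OF _ abs_ge_self])
  qed measurable
  have "(\<integral>x. norm (g x + h x) powr p \<partial>M) \<le> (\<integral>x. R x \<partial>M)"
    by (intro integral_mono iF iR pwx)
  also have "(\<integral>x. R x \<partial>M) = (a+b) powr p * (t + (1-t) - t*(1-t)*D)"
    unfolding R_def D_def using iX iY iD IX IY by simp
  finally have main: "(\<integral>x. norm (g x + h x) powr p \<partial>M) \<le> (a+b) powr p * (1 - t*(1-t)*D)" by simp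
  have t1: "t*(1-t) = (a*b)/(a+b)^2" unfolding t_def using a b by (simp add: field_simps power2_eq_square)
  have D0: "D \<ge> 0" unfolding D_def by (intro integral_nonneg_AE) auto
  have L2: "Lp_norm M 2 (\<lambda>x. X x - Y x) ^2 = D"
  proof -
    have "Lp_norm M 2 (\<lambda>x. X x - Y x) = D powr (1/2)" unfolding Lp_norm_def D_def norm_powr2 by simp
    moreover have "(D powr (1/2))^2 = D powr 1" using sq_powr[of D 1] by simp
    ultimately show ?thesis using D0 by simp
  qed
  have F0: "(\<integral>x. norm (g x + h x) powr p \<partial>M) \<ge> 0" by (intro integral_nonneg_AE) auto
  have ab0: "(a+b) powr p > 0" using a b by simp
  have K0: "1 - t*(1-t)*D \<ge> 0"
  proof -
    have "0 \<le> (a+b) powr p * (1 - t*(1-t)*D)" using F0 main by linarith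
    thus ?thesis using ab0 by (simp add: zero_le_mult_iff)
  qed
  have "Lp_norm M p (\<lambda>x. g x + h x) \<le> ((a+b) powr p * (1 - t*(1-t)*D)) powr (1/p)"
    unfolding Lp_norm_def using main F0 p by (intro powr_mono2) auto
  also have "\<dots> = (a+b) * (1 - t*(1-t)*D) powr (1/p)"
    using K0 a b p by (simp add: powr_mult powr_powr)
  finally have fin: "Lp_norm M p (\<lambda>x. g x + h x) \<le> (a+b) * (1 - t*(1-t)*D) powr (1/p)" .
  have L2': "Lp_norm M 2 (\<lambda>x. norm (g x) powr (p/2) / a powr (p/2) - norm (h x) powr (p/2) / b powr (p/2)) ^2 = D"
    using L2 unfolding X_def Y_def .
  show ?thesis
    unfolding a_def[symmetric] b_def[symmetric] L2' t1[symmetric]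
    using fin by (simp add: mult.commute)
qed

theorem theorem1p4:
  fixes M :: "'a measure" and p :: real
  assumes "p > 2"
  shows "(\<forall>g h :: 'a \<Rightarrow> real.
            memLp M p g \<and> memLp M p h \<and> \<not> (AE x in M. g x = 0) \<and> \<not> (AE x in M. h x = 0) \<longrightarrow>
            Lp_norm M p (\<lambda>x. g x + h x) \<le>
              (1 - (Lp_norm M p g * Lp_norm M p h) / (Lp_norm M p g + Lp_norm M p h)^2 *
                   (Lp_norm M 2 (\<lambda>x. norm (g x) powr (p/2) / Lp_norm M p g powr (p/2)
                                    - norm (h x) powr (p/2) / Lp_norm M p h powr (p/2)))^2) powr (1/p)
              * (Lp_norm M p g + Lp_norm M p h))
       \<and> (\<forall>g h :: 'a \<Rightarrow> complex.
            memLp M p g \<and> memLp M p h \<and> \<not> (AE x in M. g x = 0) \<and> \<not> (AE x in M. h x = 0) \<longrightarrow>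
            Lp_norm M p (\<lambda>x. g x + h x) \<le>
              (1 - (Lp_norm M p g * Lp_norm M p h) / (Lp_norm M p g + Lp_norm M p h)^2 *
                   (Lp_norm M 2 (\<lambda>x. norm (g x) powr (p/2) / Lp_norm M p g powr (p/2)
                                    - norm (h x) powr (p/2) / Lp_norm M p h powr (p/2)))^2) powr (1/p)
              * (Lp_norm M p g + Lp_norm M p h))"
  by (intro conjI allI impI; elim conjE; rule main[OF assms]; assumption)

end
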